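(* Let $S$ be a condensed space. If $I\subseteq\mathscr{C}(S)[x_1,\dots,x_n]$ is a Groebner ideal with Groebner basis $G=\{f_1,\dots,f_k\}$, then for any set $A\subseteq S$ of measure zero, $G|_{S-A}=\{f_1|_{S-A},\dots,f_k|_{S-A}\}$ is a Groebner basis of the ideal $I(S-A)\subseteq\mathscr{C}(S-A)[x_1,\dots,x_n]$.
   Context: $S\subseteq\mathbb{R}^m$ (Euclidean subspace topology). $\mathscr{P}(S)$ is the ring of restrictions to $S$ of complex polynomials in the $m$ real coordinates; a real algebraic subset of $S$ is the common zero set in $S$ of finitely many elements of $\mathscr{P}(S)$; $S$ is condensed if every real algebraic subset $V\ne S$ is nowhere dense in $S$. A set $A\subseteq S$ has measure zero if $A\neq S$ and $A=\bigcap_{i\ge1}\bigcup_{j\ge1}V_{ij}$ for some real algebraic subsets $V_{ij}$ of $S$. For $U\subseteq S$, $\mathscr{C}(U)$ denotes continuous complex-valued functions on $U$, and $I(U)$ is the ideal of $\mathscr{C}(U)[x_1,\dots,x_n]$ generated by restrictions to $U$ of elements of $I$. Fix a monomial ordering. For nonzero $h=\sum_\alpha a_\alpha x^\alpha\in\mathscr{C}(U)[x_1,\dots,x_n]$, let $\alpha_1$ be the largest multi-index with $a_{\alpha_1}$ not identically zero; $LT(h)=a_{\alpha_1}x^{\alpha_1}$, $LC(h)=a_{\alpha_1}$. A finite generating set $\{g_1,\dots,g_k\}$ of an ideal $J\subseteq\mathscr{C}(U)[x_1,\dots,x_n]$ is a Groebner basis if $\langle LT(g_1),\dots,LT(g_k)\rangle=\langle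 LT(J)\rangle$ (ideal generated by leading terms of all elements of $J$) and each $LC(g_i)$ is nowhere vanishing on $U$; $J$ is a Groebner ideal if it has a Groebner basis. *)

theory Defs
  imports "HOL-Analysis.Analysis" "HOL-Library.Poly_Mapping" "HOL-Library.Function_Algebras"
begin

text \<open>Elements of P(S): restrictions to S of complex polynomials in the m real
coordinates of real^'m.  Only the values on S matter for what follows.\<close>
type_synonym 'm cmpoly = "('m \<Rightarrow>\<^sub>0 nat) \<Rightarrow>\<^sub>0 complex"

definition is_cpoly_fun :: "(real^'m::finite \<Rightarrow> complex) \<Rightarrow> bool" where
  "is_cpoly_fun p \<longleftrightarrow> (\<exists>q :: 'm cmpoly.
     \<forall>x. p x = (\<Sum>a\<in>Poly_Mapping.keys q. Poly_Mapping.lookup q a * (\<Prod>i\<in>UNIV. complex_of_real (x$i) ^ Poly_Mapping.lookup a i)))"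

definition real_algebraic_subset :: "(real^'m::finite) set \<Rightarrow> (real^'m) set \<Rightarrow> bool" where
  "real_algebraic_subset S V \<longleftrightarrow> (\<exists>F. finite F \<and> (\<forall>p\<in>F. is_cpoly_fun p) \<and>
      V = {x\<in>S. \<forall>p\<in>F. p x = 0})"

definition condensed :: "(real^'m::finite) set \<Rightarrow> bool" where
  "condensed S \<longleftrightarrow> (\<forall>V. real_algebraic_subset S V \<and> V \<noteq> S \<longrightarrow>
      (top_of_set S) interior_of ((top_of_set S) closure_of V) = {})"

definition measure_zero_in :: "(real^'m::finite) set \<Rightarrow> (real^'m) set \<Rightarrow> bool" where
  "measure_zero_in S A \<longleftrightarrow> A \<subseteq> S \<and> A \<noteq> S \<and> (\<exists>V :: nat \<Rightarrow> nat \<Rightarrow> (real^'m) set.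
      (\<forall>i j. real_algebraic_subset S (V i j)) \<and> A = (\<Inter>i. \<Union>j. V i j))"

text \<open>A polynomial in x_1..x_n (variables indexed 0..n-1) with coefficients functions
on the ambient space.  An element of C(U)[x] is represented canonically: every
coefficient is continuous on U and vanishes outside U.\<close>
type_synonym ('a) cpoly = "(nat \<Rightarrow>\<^sub>0 nat) \<Rightarrow>\<^sub>0 ('a \<Rightarrow> complex)"

definition CP :: "'a::topological_space set \<Rightarrow> nat \<Rightarrow> 'a cpoly set" where
  "CP U n = {p. (\<forall>\<alpha>\<in>Poly_Mapping.keys p. Poly_Mapping.keys \<alpha> \<subseteq> {..<n}) \<and>
      (\<forall>\<alpha>. continuous_on U (Poly_Mapping.lookup p \<alpha>) \<and> (\<forall>x. x \<notin> U \<longrightarrow> Poly_Mapping.lookup p \<alpha> x = 0))}"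

definition restr :: "'a set \<Rightarrow> 'a cpoly \<Rightarrow> 'a cpoly" where
  "restr U p = Poly_Mapping.map (\<lambda>c x. if x \<in> U then c x else 0) p"

definition ideal_gen :: "'a::topological_space set \<Rightarrow> nat \<Rightarrow> 'a cpoly set \<Rightarrow> 'a cpoly set" where
  "ideal_gen U n F = {p. \<exists>G q. finite G \<and> G \<subseteq> F \<and> (\<forall>g\<in>G. q g \<in> CP U n) \<and>
      p = (\<Sum>g\<in>G. q g * g)}"

definition ideal_restr :: "'a::topological_space set \<Rightarrow> nat \<Rightarrow> 'a cpoly set \<Rightarrow> 'a cpoly set" where
  "ideal_restr U n I = ideal_gen U n (restr U ` I)"

definition monomials :: "nat \<Rightarrow> (nat \<Rightarrow>\<^sub>0 nat) set" where
  "monomials n = {\<alpha>. Poly_Mapping.keys \<alpha> \<subseteq> {..<n}}"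

definition monomial_order :: "nat \<Rightarrow> ((nat \<Rightarrow>\<^sub>0 nat) \<Rightarrow> (nat \<Rightarrow>\<^sub>0 nat) \<Rightarrow> bool) \<Rightarrow> bool" where
  "monomial_order n ord \<longleftrightarrow>
     (\<forall>a\<in>monomials n. ord a a) \<and>
     (\<forall>a\<in>monomials n. \<forall>b\<in>monomials n. ord a b \<and> ord b a \<longrightarrow> a = b) \<and>
     (\<forall>a\<in>monomials n. \<forall>b\<in>monomials n. \<forall>c\<in>monomials n. ord a b \<and> ord b c \<longrightarrow> ord a c) \<and>
     (\<forall>a\<in>monomials n. \<forall>b\<in>monomials n. ord a b \<or> ord b a) \<and>
     (\<forall>a\<in>monomials n. \<forall>b\<in>monomials n. \<forall>c\<in>monomials n. ord a b \<longrightarrow> ord (a + c) (b + c)) \<and>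
     (\<forall>M. M \<subseteq> monomials n \<and> M \<noteq> {} \<longrightarrow> (\<exists>a\<in>M. \<forall>b\<in>M. ord a b))"

text \<open>Largest multi-index whose coefficient is not identically zero (on U, by
canonicity of the representation).\<close>
definition lead_exp :: "((nat \<Rightarrow>\<^sub>0 nat) \<Rightarrow> (nat \<Rightarrow>\<^sub>0 nat) \<Rightarrow> bool) \<Rightarrow> 'a cpoly \<Rightarrow> nat \<Rightarrow>\<^sub>0 nat" where
  "lead_exp ord h = (THE \<alpha>. \<alpha> \<in> Poly_Mapping.keys h \<and> (\<forall>\<beta>\<in>Poly_Mapping.keys h. ord \<beta> \<alpha>))"

definition LC :: "((nat \<Rightarrow>\<^sub>0 nat) \<Rightarrow> (nat \<Rightarrow>\<^sub>0 nat) \<Rightarrow> bool) \<Rightarrow> 'a cpoly \<Rightarrow> 'a \<Rightarrow> complex" where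
  "LC ord h = Poly_Mapping.lookup h (lead_exp ord h)"

definition LT :: "((nat \<Rightarrow>\<^sub>0 nat) \<Rightarrow> (nat \<Rightarrow>\<^sub>0 nat) \<Rightarrow> bool) \<Rightarrow> 'a cpoly \<Rightarrow> 'a cpoly" where
  "LT ord h = Poly_Mapping.single (lead_exp ord h) (LC ord h)"

definition groebner_basis ::
  "'a::topological_space set \<Rightarrow> nat \<Rightarrow> ((nat \<Rightarrow>\<^sub>0 nat) \<Rightarrow> (nat \<Rightarrow>\<^sub>0 nat) \<Rightarrow> bool)
     \<Rightarrow> 'a cpoly list \<Rightarrow> 'a cpoly set \<Rightarrow> bool" where
  "groebner_basis U n ord G J \<longleftrightarrow>
     set G \<subseteq> CP U n \<and>
     ideal_gen U n (set G) = J \<and>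
     ideal_gen U n (LT ord ` set G) = ideal_gen U n {LT ord h | h. h \<in> J \<and> h \<noteq> 0} \<and>
     (\<forall>g\<in>set G. \<forall>x\<in>U. LC ord g x \<noteq> 0)"

end

theory Submission
  imports Defs
begin

definition chi :: "'a set \<Rightarrow> 'a \<Rightarrow> complex" where
  "chi U = (\<lambda>x. if x \<in> U then 1 else 0)"

lemma lookup_map_pm: "Poly_Mapping.lookup (Poly_Mapping.map f p) k = (f (Poly_Mapping.lookup p k) when Poly_Mapping.lookup p k \<noteq> 0)"
  by (simp add: Poly_Mapping.map.rep_eq)

lemma lookup_smult0: "Poly_Mapping.lookup (Poly_Mapping.single 0 c * p) k = c * Poly_Mapping.lookup p k"
  by (simp add: mult_map_scale_conv_mult[symmetric] lookup_map_pm when_def)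

lemma lookup_single_mult:
  fixes p :: "('k::cancel_comm_monoid_add) \<Rightarrow>\<^sub>0 ('b::comm_semiring_1)"
  shows "Poly_Mapping.lookup (Poly_Mapping.single g c * p) k =
     (if \<exists>b. k = g + b then c * Poly_Mapping.lookup p (THE b. k = g + b) else 0)"
proof (cases "\<exists>b. k = g + b")
  case True
  then obtain b where kb: "k = g + b" by blast
  have th: "(THE b. k = g + b) = b" using kb by (auto intro!: the_equality)
  have "Poly_Mapping.lookup (Poly_Mapping.single g c * p) k = (\<Sum>l. (c when g = l) * (\<Sum>q. Poly_Mapping.lookup p q when k = l + q))"
    by (simp add: lookup_mult lookup_single)
  also have "\<dots> = c * (\<Sum>q. Poly_Mapping.lookup p q when k = g + q)"
    by (simp add: when_mult)
  also have "\<dots> = c * (\<Sum>q. Poly_Mapping.lookup p q when q = b)"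
    by (simp add: kb)
  also have "\<dots> = c * Poly_Mapping.lookup p b" by simp
  finally show ?thesis using True th by simp
next
  case False
  have "Poly_Mapping.lookup (Poly_Mapping.single g c * p) k = (\<Sum>l. (c when g = l) * (\<Sum>q. Poly_Mapping.lookup p q when k = l + q))"
    by (simp add: lookup_mult lookup_single)
  also have "\<dots> = c * (\<Sum>q. Poly_Mapping.lookup p q when k = g + q)"
    by (simp add: when_mult)
  also have "\<dots> = 0" using False by (simp add: when_def)
  finally show ?thesis using False by simp
qed

lemma lookup_single_mult_add:
  fixes p :: "('k::cancel_comm_monoid_add) \<Rightarrow>\<^sub>0 ('b::comm_semiring_1)"
  shows "Poly_Mapping.lookup (Poly_Mapping.single g c * p) (g + b) = c * Poly_Mapping.lookup p b"
  by (simp add: lookup_single_mult)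

lemma pm_expand: "p = (\<Sum>a\<in>Poly_Mapping.keys p. Poly_Mapping.single a (Poly_Mapping.lookup p a))"
proof (rule poly_mapping_eqI)
  fix k
  show "Poly_Mapping.lookup p k = Poly_Mapping.lookup (\<Sum>a\<in>Poly_Mapping.keys p. Poly_Mapping.single a (Poly_Mapping.lookup p a)) k"
    by (simp add: lookup_sum lookup_single when_def in_keys_iff)
qed

lemma restr_eq: "restr U p = Poly_Mapping.single 0 (chi U) * p"
  by (rule poly_mapping_eqI) (auto simp: restr_def lookup_map_pm lookup_smult0 chi_def when_def fun_eq_iff)


lemma monomials_add: "a \<in> monomials n \<Longrightarrow> b \<in> monomials n \<Longrightarrow> a + b \<in> monomials n"
  unfolding monomials_def using keys_add[of a b] by blast

lemma monomials_zero: "0 \<in> monomials n"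
  unfolding monomials_def by simp

lemma monomials_addD:
  fixes a b :: "nat \<Rightarrow>\<^sub>0 nat"
  assumes "a + b \<in> monomials n" shows "a \<in> monomials n \<and> b \<in> monomials n"
proof -
  have "Poly_Mapping.keys a \<subseteq> Poly_Mapping.keys (a + b)" "Poly_Mapping.keys b \<subseteq> Poly_Mapping.keys (a + b)"
    by (auto simp: in_keys_iff lookup_add)
  then show ?thesis using assms unfolding monomials_def by blast
qed

lemma CP_iff: "p \<in> CP U n \<longleftrightarrow> Poly_Mapping.keys p \<subseteq> monomials n \<and>
   (\<forall>\<alpha>. continuous_on U (Poly_Mapping.lookup p \<alpha>) \<and> (\<forall>x. x \<notin> U \<longrightarrow> Poly_Mapping.lookup p \<alpha> x = 0))"
  unfolding CP_def monomials_def by blast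

lemma CP_zero: "0 \<in> CP U n"
  by (simp add: CP_iff continuous_on_const zero_fun_def)

lemma CP_add: "p \<in> CP U n \<Longrightarrow> q \<in> CP U n \<Longrightarrow> p + q \<in> CP U n"
  unfolding CP_iff using keys_add[of p q]
  by (auto simp: lookup_add plus_fun_def intro!: continuous_on_add)

lemma CP_uminus: "p \<in> CP U n \<Longrightarrow> - p \<in> CP U n"
  unfolding CP_iff by (auto simp: fun_Compl_def intro!: continuous_on_minus)

lemma CP_diff: "p \<in> CP U n \<Longrightarrow> q \<in> CP U n \<Longrightarrow> p - q \<in> CP U n"
  using CP_add[OF _ CP_uminus] by (metis diff_conv_add_uminus)

lemma CP_sum: "(\<And>i. i \<in> K \<Longrightarrow> f i \<in> CP U n) \<Longrightarrow> sum f K \<in> CP U n"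
  by (induction K rule: infinite_finite_induct) (auto simp: CP_zero CP_add)

lemma CP_single: "\<gamma> \<in> monomials n \<Longrightarrow> continuous_on U c \<Longrightarrow> (\<And>x. x \<notin> U \<Longrightarrow> c x = 0) \<Longrightarrow>
   Poly_Mapping.single \<gamma> c \<in> CP U n"
  unfolding CP_iff by (auto simp: lookup_single when_def continuous_on_const zero_fun_def)

lemma CP_lookupD: "p \<in> CP U n \<Longrightarrow> continuous_on U (Poly_Mapping.lookup p \<alpha>)"
  "p \<in> CP U n \<Longrightarrow> x \<notin> U \<Longrightarrow> Poly_Mapping.lookup p \<alpha> x = 0"
  "p \<in> CP U n \<Longrightarrow> Poly_Mapping.keys p \<subseteq> monomials n"
  unfolding CP_iff by auto

lemma CP_mult: assumes "p \<in> CP U n" "q \<in> CP U n" shows "p * q \<in> CP U n"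
proof -
  have "p * q = (\<Sum>a\<in>Poly_Mapping.keys p. Poly_Mapping.single a (Poly_Mapping.lookup p a)) *
        (\<Sum>b\<in>Poly_Mapping.keys q. Poly_Mapping.single b (Poly_Mapping.lookup q b))"
    using pm_expand[of p] pm_expand[of q] by simp
  also have "\<dots> = (\<Sum>a\<in>Poly_Mapping.keys p. \<Sum>b\<in>Poly_Mapping.keys q.
      Poly_Mapping.single (a + b) (Poly_Mapping.lookup p a * Poly_Mapping.lookup q b))"
    by (simp add: sum_distrib_left sum_distrib_right mult_single) (rule sum.swap)
  also have "\<dots> \<in> CP U n"
  proof (intro CP_sum CP_single)
    fix a b assume "a \<in> Poly_Mapping.keys p" "b \<in> Poly_Mapping.keys q"
    then show "a + b \<in> monomials n" using assms by (auto intro!: monomials_add dest: CP_lookupD(3))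
  next
    fix a b show "continuous_on U (Poly_Mapping.lookup p a * Poly_Mapping.lookup q b)"
      using assms by (auto simp: times_fun_def intro!: continuous_on_mult CP_lookupD)
  next
    fix a b x assume "x \<notin> U" then show "(Poly_Mapping.lookup p a * Poly_Mapping.lookup q b) x = 0"
      using assms by (simp add: CP_lookupD(2))
  qed
  finally show ?thesis .
qed

lemma chi_mult: "(\<forall>x. x \<notin> U \<longrightarrow> f x = 0) \<Longrightarrow> chi U * f = f"
  by (auto simp: chi_def fun_eq_iff)

lemma single_chi_mult: "(\<And>\<alpha> x. x \<notin> U \<Longrightarrow> Poly_Mapping.lookup f \<alpha> x = 0) \<Longrightarrow> Poly_Mapping.single 0 (chi U) * f = f"
  by (rule poly_mapping_eqI) (simp add: lookup_smult0 chi_mult)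

lemma CP_chi: "Poly_Mapping.single 0 (chi U) \<in> CP U n"
  by (rule CP_single) (auto simp: monomials_zero chi_def intro: continuous_on_eq[OF continuous_on_const])

lemma ig_zero: "0 \<in> ideal_gen U n F"
  unfolding ideal_gen_def by (rule CollectI, rule exI[of _ "{}"]) auto

lemma ig_add: assumes "p \<in> ideal_gen U n F" "p' \<in> ideal_gen U n F" shows "p + p' \<in> ideal_gen U n F"
proof -
  from assms obtain G1 q1 G2 q2 where 1: "finite G1" "G1 \<subseteq> F" "\<forall>g\<in>G1. q1 g \<in> CP U n" "p = (\<Sum>g\<in>G1. q1 g * g)"
    and 2: "finite G2" "G2 \<subseteq> F" "\<forall>g\<in>G2. q2 g \<in> CP U n" "p' = (\<Sum>g\<in>G2. q2 g * g)"
    unfolding ideal_gen_def by blast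
  define q where "q g = (if g \<in> G1 then q1 g else 0) + (if g \<in> G2 then q2 g else 0)" for g
  have a: "(\<Sum>g\<in>G1 \<union> G2. (if g \<in> G1 then q1 g else 0) * g) = p"
    unfolding 1(4) using 1 2 by (intro sum.mono_neutral_cong_right) simp_all
  have b: "(\<Sum>g\<in>G1 \<union> G2. (if g \<in> G2 then q2 g else 0) * g) = p'"
    unfolding 2(4) using 1 2 by (intro sum.mono_neutral_cong_right) simp_all
  have "p + p' = (\<Sum>g\<in>G1 \<union> G2. q g * g)"
    unfolding q_def distrib_right sum.distrib a b ..
  moreover have "\<forall>g\<in>G1 \<union> G2. q g \<in> CP U n"
    using 1 2 by (auto simp: q_def intro!: CP_add CP_zero)
  ultimately show ?thesis using 1 2 unfolding ideal_gen_def mem_Collect_eq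
    by (intro exI[of _ "G1 \<union> G2"] exI[of _ q]) simp
qed

lemma ig_mult: assumes "p \<in> ideal_gen U n F" "c \<in> CP U n" shows "c * p \<in> ideal_gen U n F"
proof -
  from assms obtain G1 q1 where 1: "finite G1" "G1 \<subseteq> F" "\<forall>g\<in>G1. q1 g \<in> CP U n" "p = (\<Sum>g\<in>G1. q1 g * g)"
    unfolding ideal_gen_def by blast
  have "c * p = (\<Sum>g\<in>G1. (c * q1 g) * g)" unfolding 1(4) sum_distrib_left by (simp add: mult.assoc)
  moreover have "\<forall>g\<in>G1. c * q1 g \<in> CP U n" using 1 assms by (auto intro: CP_mult)
  ultimately show ?thesis using 1 unfolding ideal_gen_def mem_Collect_eq
    by (intro exI[of _ G1]) auto
qed

lemma ig_uminus: assumes "p \<in> ideal_gen U n F" shows "- p \<in> ideal_gen U n F"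
proof -
  from assms obtain G1 q1 where 1: "finite G1" "G1 \<subseteq> F" "\<forall>g\<in>G1. q1 g \<in> CP U n" "p = (\<Sum>g\<in>G1. q1 g * g)"
    unfolding ideal_gen_def by blast
  have "- p = (\<Sum>g\<in>G1. (- q1 g) * g)" unfolding 1(4) by (simp add: sum_negf)
  moreover have "\<forall>g\<in>G1. - q1 g \<in> CP U n" using 1 by (auto intro: CP_uminus)
  ultimately show ?thesis using 1 unfolding ideal_gen_def mem_Collect_eq
    by (intro exI[of _ G1]) auto
qed

lemma ig_diff: "p \<in> ideal_gen U n F \<Longrightarrow> p' \<in> ideal_gen U n F \<Longrightarrow> p - p' \<in> ideal_gen U n F"
  by (metis diff_conv_add_uminus ig_add ig_uminus)

lemma ig_sum: "(\<And>i. i \<in> K \<Longrightarrow> f i \<in> ideal_gen U n F) \<Longrightarrow> sum f K \<in> ideal_gen U n F"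
  by (induction K rule: infinite_finite_induct) (auto simp: ig_zero ig_add)

lemma ig_base: assumes "f \<in> F" "\<And>\<alpha> x. x \<notin> U \<Longrightarrow> Poly_Mapping.lookup f \<alpha> x = 0"
  shows "f \<in> ideal_gen U n F"
proof -
  have "f = (\<Sum>g\<in>{f}. Poly_Mapping.single 0 (chi U) * g)" using single_chi_mult[OF assms(2)] by simp
  then show ?thesis using assms(1) CP_chi unfolding ideal_gen_def mem_Collect_eq
    by (intro exI[of _ "{f}"] exI[of _ "\<lambda>_. Poly_Mapping.single 0 (chi U)"]) simp
qed

lemma ig_trans: assumes "F' \<subseteq> ideal_gen U n F" shows "ideal_gen U n F' \<subseteq> ideal_gen U n F"
proof
  fix p assume "p \<in> ideal_gen U n F'"
  then obtain G1 q1 where 1: "finite G1" "G1 \<subseteq> F'" "\<forall>g\<in>G1. q1 g \<in> CP U n" "p = (\<Sum>g\<in>G1. q1 g * g)"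
    unfolding ideal_gen_def by blast
  show "p \<in> ideal_gen U n F" unfolding 1(4) using 1 assms by (auto intro!: ig_sum ig_mult)
qed

lemma ig_mono: "F' \<subseteq> F \<Longrightarrow> ideal_gen U n F' \<subseteq> ideal_gen U n F"
  unfolding ideal_gen_def by blast

lemma ig_CP: assumes "F \<subseteq> CP U n" shows "ideal_gen U n F \<subseteq> CP U n"
proof
  fix p assume "p \<in> ideal_gen U n F"
  then obtain G1 q1 where 1: "finite G1" "G1 \<subseteq> F" "\<forall>g\<in>G1. q1 g \<in> CP U n" "p = (\<Sum>g\<in>G1. q1 g * g)"
    unfolding ideal_gen_def by blast
  show "p \<in> CP U n" unfolding 1(4) using 1 assms by (auto intro!: CP_sum CP_mult)
qed


lemma keys_diff_sub: "Poly_Mapping.keys (a - b) \<subseteq> Poly_Mapping.keys a \<union> Poly_Mapping.keys b"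
  by (auto simp: in_keys_iff lookup_minus)

lemma keys_smult0: "Poly_Mapping.keys (Poly_Mapping.single 0 c * p) \<subseteq> Poly_Mapping.keys p"
  by (auto simp: in_keys_iff lookup_smult0)

lemma chi_idem: "Poly_Mapping.single 0 (chi U) * Poly_Mapping.single 0 (chi U) = Poly_Mapping.single 0 (chi U)"
  by (simp add: mult_single chi_def times_fun_def if_distrib cong: if_cong)

lemma restr_keys: "Poly_Mapping.keys (restr U p) \<subseteq> Poly_Mapping.keys p"
  unfolding restr_eq by (rule keys_smult0)

lemma lookup_restr: "Poly_Mapping.lookup (restr U p) k = chi U * Poly_Mapping.lookup p k"
  unfolding restr_eq by (rule lookup_smult0)

lemma restr_CP: assumes "p \<in> CP S n" "U \<subseteq> S" shows "restr U p \<in> CP U n"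
  unfolding CP_iff
proof (intro conjI allI impI)
  show "Poly_Mapping.keys (restr U p) \<subseteq> monomials n" using restr_keys CP_lookupD(3)[OF assms(1)] by blast
next
  fix \<alpha>
  have "continuous_on U (Poly_Mapping.lookup p \<alpha>)"
    using continuous_on_subset[OF CP_lookupD(1)[OF assms(1)] assms(2)] .
  then show "continuous_on U (Poly_Mapping.lookup (restr U p) \<alpha>)"
    by (rule continuous_on_eq) (simp add: lookup_restr chi_def)
next
  fix \<alpha> x assume "x \<notin> U" then show "Poly_Mapping.lookup (restr U p) \<alpha> x = 0"
    by (simp add: lookup_restr chi_def)
qed

lemma restr_vanish: "x \<notin> U \<Longrightarrow> Poly_Mapping.lookup (restr U p) \<alpha> x = 0"
  by (simp add: lookup_restr chi_def)

lemma restr_mult: "restr U (p * q) = restr U p * restr U q"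
proof -
  have "restr U p * restr U q = (Poly_Mapping.single 0 (chi U) * Poly_Mapping.single 0 (chi U)) * (p * q)"
    unfolding restr_eq by (simp add: ac_simps)
  then show ?thesis unfolding chi_idem restr_eq by simp
qed

lemma restr_sum: "restr U (sum f K) = (\<Sum>k\<in>K. restr U (f k))"
  unfolding restr_eq by (simp add: sum_distrib_left)

lemma mo_props:
  assumes "monomial_order n ord"
  shows "a \<in> monomials n \<Longrightarrow> ord a a"
    and "a \<in> monomials n \<Longrightarrow> b \<in> monomials n \<Longrightarrow> ord a b \<Longrightarrow> ord b a \<Longrightarrow> a = b"
    and "a \<in> monomials n \<Longrightarrow> b \<in> monomials n \<Longrightarrow> c \<in> monomials n \<Longrightarrow> ord a b \<Longrightarrow> ord b c \<Longrightarrow> ord a c"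
    and "a \<in> monomials n \<Longrightarrow> b \<in> monomials n \<Longrightarrow> ord a b \<or> ord b a"
    and "a \<in> monomials n \<Longrightarrow> b \<in> monomials n \<Longrightarrow> c \<in> monomials n \<Longrightarrow> ord a b \<Longrightarrow> ord (a + c) (b + c)"
    and "M \<subseteq> monomials n \<Longrightarrow> M \<noteq> {} \<Longrightarrow> \<exists>a\<in>M. \<forall>b\<in>M. ord a b"
proof -
  note D = assms[unfolded monomial_order_def]
  note D1 = D[THEN conjunct1]
  note D2 = D[THEN conjunct2, THEN conjunct1]
  note D3 = D[THEN conjunct2, THEN conjunct2, THEN conjunct1]
  note D4 = D[THEN conjunct2, THEN conjunct2, THEN conjunct2, THEN conjunct1]
  note D5 = D[THEN conjunct2, THEN conjunct2, THEN conjunct2, THEN conjunct2, THEN conjunct1]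
  note D6 = D[THEN conjunct2, THEN conjunct2, THEN conjunct2, THEN conjunct2, THEN conjunct2]
  show "a \<in> monomials n \<Longrightarrow> ord a a" using D1 by blast
  show "a \<in> monomials n \<Longrightarrow> b \<in> monomials n \<Longrightarrow> ord a b \<Longrightarrow> ord b a \<Longrightarrow> a = b"
    using D2 by blast
  show "a \<in> monomials n \<Longrightarrow> b \<in> monomials n \<Longrightarrow> c \<in> monomials n \<Longrightarrow> ord a b \<Longrightarrow> ord b c \<Longrightarrow> ord a c"
    using D3 by blast
  show "a \<in> monomials n \<Longrightarrow> b \<in> monomials n \<Longrightarrow> ord a b \<or> ord b a" using D4 by blast
  show "a \<in> monomials n \<Longrightarrow> b \<in> monomials n \<Longrightarrow> c \<in> monomials n \<Longrightarrow> ord a b \<Longrightarrow> ord (a + c) (b + c)"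
    using D5 by blast
  show "M \<subseteq> monomials n \<Longrightarrow> M \<noteq> {} \<Longrightarrow> \<exists>a\<in>M. \<forall>b\<in>M. ord a b" using D6 by blast
qed

lemma mo_max:
  assumes "monomial_order n ord" "finite K" "K \<noteq> {}" "K \<subseteq> monomials n"
  shows "\<exists>m\<in>K. \<forall>b\<in>K. ord b m"
  using assms(2,3,4)
proof (induction K rule: finite_ne_induct)
  case (singleton x) then show ?case using mo_props(1)[OF assms(1)] by auto
next
  case (insert x F)
  then obtain m where m: "m \<in> F" "\<forall>b\<in>F. ord b m" by auto
  have xm: "x \<in> monomials n" "m \<in> monomials n" using insert m by auto
  show ?case
  proof (cases "ord x m")
    case True then show ?thesis using m by auto
  next
    case False
    then have "ord m x" using mo_props(4)[OF assms(1) xm] by auto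
    have "\<forall>b\<in>insert x F. ord b x"
    proof
      fix b assume "b \<in> insert x F"
      then show "ord b x"
      proof
        assume "b = x" then show ?thesis using mo_props(1)[OF assms(1) xm(1)] by simp
      next
        assume "b \<in> F"
        then have "ord b m" "b \<in> monomials n" using m insert.prems by auto
        then show ?thesis using mo_props(3)[OF assms(1) _ xm(2) xm(1)] \<open>ord m x\<close> by blast
      qed
    qed
    then show ?thesis by blast
  qed
qed

lemma lead_unique:
  assumes "monomial_order n ord" "Poly_Mapping.keys p \<subseteq> monomials n"
    "a \<in> Poly_Mapping.keys p" "\<forall>b\<in>Poly_Mapping.keys p. ord b a"
  shows "lead_exp ord p = a"
  unfolding lead_exp_def
proof (rule the_equality)
  show "a \<in> Poly_Mapping.keys p \<and> (\<forall>b\<in>Poly_Mapping.keys p. ord b a)" using assms by auto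
next
  fix c assume "c \<in> Poly_Mapping.keys p \<and> (\<forall>b\<in>Poly_Mapping.keys p. ord b c)"
  then show "c = a" using assms mo_props(2)[OF assms(1)] by blast
qed

lemma lead_props:
  assumes "monomial_order n ord" "Poly_Mapping.keys p \<subseteq> monomials n" "p \<noteq> 0"
  shows "lead_exp ord p \<in> Poly_Mapping.keys p" "\<And>b. b \<in> Poly_Mapping.keys p \<Longrightarrow> ord b (lead_exp ord p)"
proof -
  obtain m where m: "m \<in> Poly_Mapping.keys p" "\<forall>b\<in>Poly_Mapping.keys p. ord b m"
    using mo_max[OF assms(1) finite_keys _ assms(2)] assms(3) by auto
  have "lead_exp ord p = m" by (rule lead_unique[OF assms(1,2) m])
  then show "lead_exp ord p \<in> Poly_Mapping.keys p" "\<And>b. b \<in> Poly_Mapping.keys p \<Longrightarrow> ord b (lead_exp ord p)"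
    using m by auto
qed


definition Bset :: "nat \<Rightarrow> ((nat \<Rightarrow>\<^sub>0 nat) \<Rightarrow> (nat \<Rightarrow>\<^sub>0 nat) \<Rightarrow> bool) \<Rightarrow> 'a cpoly list \<Rightarrow> (nat \<Rightarrow>\<^sub>0 nat) set" where
  "Bset n ord G = {\<beta> \<in> monomials n. \<forall>g\<in>set G. \<forall>\<gamma>. \<beta> \<noteq> lead_exp ord g + \<gamma>}"

locale gbs =
  fixes S :: "'a::topological_space set" and n :: nat
    and ord :: "(nat \<Rightarrow>\<^sub>0 nat) \<Rightarrow> (nat \<Rightarrow>\<^sub>0 nat) \<Rightarrow> bool"
    and G :: "'a cpoly list" and I :: "'a cpoly set"
  assumes mo: "monomial_order n ord"
    and gb: "groebner_basis S n ord G I"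
    and Sne: "S \<noteq> {}"
begin

abbreviation "B \<equiv> Bset n ord G"

lemma G_CP: "set G \<subseteq> CP S n" using gb unfolding groebner_basis_def by blast
lemma I_eq: "ideal_gen S n (set G) = I" using gb unfolding groebner_basis_def by blast
lemma LT_eq: "ideal_gen S n (LT ord ` set G) = ideal_gen S n {LT ord h | h. h \<in> I \<and> h \<noteq> 0}"
  using gb unfolding groebner_basis_def by blast
lemma LC_nz: "g \<in> set G \<Longrightarrow> x \<in> S \<Longrightarrow> LC ord g x \<noteq> 0"
  using gb unfolding groebner_basis_def by blast

lemma I_CP: "I \<subseteq> CP S n" using ig_CP[OF G_CP] I_eq by simp

lemma I_vanish: "f \<in> I \<Longrightarrow> x \<notin> S \<Longrightarrow> Poly_Mapping.lookup f \<alpha> x = 0"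
  using I_CP CP_lookupD(2) by blast

lemma G_I: "g \<in> set G \<Longrightarrow> g \<in> I"
  using ig_base[of g "set G" S n] G_CP CP_lookupD(2) I_eq by blast

lemma g_nz: assumes "g \<in> set G" shows "g \<noteq> 0"
proof
  assume "g = 0"
  obtain x where "x \<in> S" using Sne by blast
  then show False using LC_nz[OF assms \<open>x \<in> S\<close>] \<open>g = 0\<close> by (simp add: LC_def)
qed

lemma g_keys: "g \<in> set G \<Longrightarrow> Poly_Mapping.keys g \<subseteq> monomials n"
  using G_CP CP_lookupD(3) by blast

lemma g_lead: assumes "g \<in> set G"
  shows "lead_exp ord g \<in> Poly_Mapping.keys g" "\<And>b. b \<in> Poly_Mapping.keys g \<Longrightarrow> ord b (lead_exp ord g)"
    "lead_exp ord g \<in> monomials n"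
  using lead_props[OF mo g_keys[OF assms] g_nz[OF assms]] g_keys[OF assms] by auto

lemma I_add: "p \<in> I \<Longrightarrow> q \<in> I \<Longrightarrow> p + q \<in> I" using ig_add I_eq by blast
lemma I_diff: "p \<in> I \<Longrightarrow> q \<in> I \<Longrightarrow> p - q \<in> I" using ig_diff I_eq by blast
lemma I_mult: "p \<in> I \<Longrightarrow> c \<in> CP S n \<Longrightarrow> c * p \<in> I" using ig_mult I_eq by blast
lemma I_sum: "(\<And>i. i \<in> K \<Longrightarrow> f i \<in> I) \<Longrightarrow> sum f K \<in> I" using ig_sum I_eq by blast
lemma I_zero: "0 \<in> I" using ig_zero I_eq by blast

lemma uniq: assumes "p \<in> I" "Poly_Mapping.keys p \<subseteq> B" shows "p = 0"
proof (rule ccontr)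
  assume nz: "p \<noteq> 0"
  have pk: "Poly_Mapping.keys p \<subseteq> monomials n" using assms(1) I_CP CP_lookupD(3) by blast
  define \<delta> where "\<delta> = lead_exp ord p"
  have dk: "\<delta> \<in> Poly_Mapping.keys p" using lead_props(1)[OF mo pk nz] \<delta>_def by simp
  then have dB: "\<delta> \<in> B" using assms(2) by blast
  have "LT ord p \<in> {LT ord h | h. h \<in> I \<and> h \<noteq> 0}" using assms(1) nz by blast
  moreover have "\<And>\<alpha> x. x \<notin> S \<Longrightarrow> Poly_Mapping.lookup (LT ord p) \<alpha> x = 0"
    using I_vanish[OF assms(1)] by (simp add: LT_def LC_def lookup_single when_def)
  ultimately have "LT ord p \<in> ideal_gen S n {LT ord h | h. h \<in> I \<and> h \<noteq> 0}" by (rule ig_base)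
  then have "LT ord p \<in> ideal_gen S n (LT ord ` set G)" using LT_eq by simp
  then obtain G1 q where 1: "finite G1" "G1 \<subseteq> LT ord ` set G" "LT ord p = (\<Sum>g\<in>G1. q g * g)"
    unfolding ideal_gen_def by blast
  have "\<forall>t\<in>G1. Poly_Mapping.lookup (q t * t) \<delta> = 0"
  proof
    fix t assume "t \<in> G1"
    then obtain g where g: "g \<in> set G" "t = LT ord g" using 1 by blast
    have "\<not> (\<exists>b. \<delta> = lead_exp ord g + b)" using dB g(1) unfolding Bset_def by blast
    then show "Poly_Mapping.lookup (q t * t) \<delta> = 0"
      unfolding g(2) LT_def by (simp add: mult.commute[of "q _"] lookup_single_mult)
  qed
  then have "Poly_Mapping.lookup (LT ord p) \<delta> = 0" unfolding 1(3) lookup_sum by simp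
  then have "Poly_Mapping.lookup p \<delta> = 0" by (simp add: LT_def LC_def \<delta>_def)
  then show False using dk by (simp add: in_keys_iff)
qed


definition good :: "'a cpoly \<Rightarrow> bool" where
  "good p \<longleftrightarrow> (\<exists>r\<in>CP S n. p - r \<in> I \<and> Poly_Mapping.keys r \<subseteq> B \<and>
      (\<forall>k\<in>Poly_Mapping.keys r. \<exists>k'\<in>Poly_Mapping.keys p. ord k k'))"

lemma good_zero: "good 0"
  unfolding good_def using CP_zero I_zero by force

lemma chiS_CP: "\<beta> \<in> monomials n \<Longrightarrow> Poly_Mapping.single \<beta> (chi S) \<in> CP S n"
  by (rule CP_single) (auto simp: chi_def intro: continuous_on_eq[OF continuous_on_const])

lemma nf_exists: assumes "p \<in> CP S n" shows "good p"
proof (rule ccontr)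
  assume bad0: "\<not> good p"
  define M where "M = {lead_exp ord p | p. p \<in> CP S n \<and> \<not> good p}"
  have Mmon: "M \<subseteq> monomials n"
  proof
    fix d assume "d \<in> M"
    then obtain q where q: "d = lead_exp ord q" "q \<in> CP S n" "\<not> good q" unfolding M_def by blast
    then have "q \<noteq> 0" using good_zero by auto
    then show "d \<in> monomials n" using lead_props(1)[OF mo CP_lookupD(3)[OF q(2)]] q CP_lookupD(3)[OF q(2)] by auto
  qed
  have "M \<noteq> {}" using assms bad0 unfolding M_def by blast
  then obtain \<delta> where dM: "\<delta> \<in> M" and dmin: "\<forall>b\<in>M. ord \<delta> b" using mo_props(6)[OF mo Mmon] by blast
  then obtain p where p: "\<delta> = lead_exp ord p" "p \<in> CP S n" "\<not> good p" unfolding M_def by blast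
  have pnz: "p \<noteq> 0" using p good_zero by auto
  have pk: "Poly_Mapping.keys p \<subseteq> monomials n" using CP_lookupD(3)[OF p(2)] .
  have dk: "\<delta> \<in> Poly_Mapping.keys p" and dmax: "\<And>b. b \<in> Poly_Mapping.keys p \<Longrightarrow> ord b \<delta>"
    using lead_props[OF mo pk pnz] p(1) by auto
  have dmon: "\<delta> \<in> monomials n" using dk pk by blast
  have claim: "good p'" if p': "p' \<in> CP S n" "\<forall>k\<in>Poly_Mapping.keys p'. ord k \<delta>" "\<delta> \<notin> Poly_Mapping.keys p'" for p'
  proof (rule ccontr)
    assume nb: "\<not> good p'"
    then have nz: "p' \<noteq> 0" using good_zero by auto
    have pk': "Poly_Mapping.keys p' \<subseteq> monomials n" using CP_lookupD(3)[OF p'(1)] .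
    have "lead_exp ord p' \<in> M" using nb p'(1) unfolding M_def by blast
    then have 1: "ord \<delta> (lead_exp ord p')" using dmin by blast
    have lk: "lead_exp ord p' \<in> Poly_Mapping.keys p'" using lead_props(1)[OF mo pk' nz] .
    then have 2: "ord (lead_exp ord p') \<delta>" using p'(2) by blast
    have "lead_exp ord p' = \<delta>" using mo_props(2)[OF mo _ dmon 2 1] lk pk' by blast
    then show False using lk p'(3) by simp
  qed
  show False
  proof (cases "\<delta> \<in> B")
    case True
    define p' where "p' = p - Poly_Mapping.single \<delta> (Poly_Mapping.lookup p \<delta>)"
    have sCP: "Poly_Mapping.single \<delta> (Poly_Mapping.lookup p \<delta>) \<in> CP S n"
      using CP_single[OF dmon CP_lookupD(1)[OF p(2)] CP_lookupD(2)[OF p(2)]] .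
    have p'CP: "p' \<in> CP S n" unfolding p'_def using CP_diff[OF p(2) sCP] .
    have lp': "Poly_Mapping.lookup p' k = (if k = \<delta> then 0 else Poly_Mapping.lookup p k)" for k
      unfolding p'_def by (simp add: lookup_minus lookup_single when_def)
    have kp': "Poly_Mapping.keys p' \<subseteq> Poly_Mapping.keys p - {\<delta>}"
      by (auto simp: in_keys_iff lp' split: if_splits)
    have "good p'" using claim[OF p'CP] kp' dmax by blast
    then obtain r' where r': "r' \<in> CP S n" "p' - r' \<in> I" "Poly_Mapping.keys r' \<subseteq> B"
       "\<forall>k\<in>Poly_Mapping.keys r'. \<exists>k'\<in>Poly_Mapping.keys p'. ord k k'" unfolding good_def by blast
    define r where "r = r' + Poly_Mapping.single \<delta> (Poly_Mapping.lookup p \<delta>)"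
    have "r \<in> CP S n" unfolding r_def using CP_add[OF r'(1) sCP] .
    moreover have "p - r \<in> I" using r'(2) unfolding r_def p'_def by (simp add: algebra_simps)
    moreover have "Poly_Mapping.keys r \<subseteq> B"
      using keys_add[of r' "Poly_Mapping.single \<delta> (Poly_Mapping.lookup p \<delta>)"] r'(3) True
      unfolding r_def by (auto split: if_splits)
    moreover have "\<forall>k\<in>Poly_Mapping.keys r. \<exists>k'\<in>Poly_Mapping.keys p. ord k k'"
    proof
      fix k assume "k \<in> Poly_Mapping.keys r"
      then have "k \<in> Poly_Mapping.keys r' \<or> k = \<delta>"
        using keys_add[of r' "Poly_Mapping.single \<delta> (Poly_Mapping.lookup p \<delta>)"] unfolding r_def
        by (auto split: if_splits)
      then show "\<exists>k'\<in>Poly_Mapping.keys p. ord k k'"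
      proof
        assume "k \<in> Poly_Mapping.keys r'"
        then show ?thesis using r'(4) kp' by blast
      next
        assume "k = \<delta>" then show ?thesis using dk mo_props(1)[OF mo dmon] by blast
      qed
    qed
    ultimately have "good p" unfolding good_def by blast
    then show False using p(3) by simp
  next
    case False
    then obtain g \<gamma> where g: "g \<in> set G" "\<delta> = lead_exp ord g + \<gamma>"
      using dmon unfolding Bset_def by blast
    have gmon: "\<gamma> \<in> monomials n" using monomials_addD[of _ _ n] g(2) dmon by metis
    define c where "c = (\<lambda>x. if x \<in> S then Poly_Mapping.lookup p \<delta> x / LC ord g x else 0)"
    have ccont: "continuous_on S c"
    proof -
      have "continuous_on S (\<lambda>x. Poly_Mapping.lookup p \<delta> x / LC ord g x)"
        using CP_lookupD(1)[OF p(2)] CP_lookupD(1)[of g S n] G_CP g(1) LC_nz[OF g(1)]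
        unfolding LC_def by (intro continuous_on_divide) auto
      then show ?thesis by (rule continuous_on_eq) (simp add: c_def)
    qed
    have scCP: "Poly_Mapping.single \<gamma> c \<in> CP S n"
      by (rule CP_single[OF gmon ccont]) (simp add: c_def)
    define m where "m = Poly_Mapping.single \<gamma> c * g"
    have gCP: "g \<in> CP S n" using G_CP g(1) by blast
    have mI: "m \<in> I" unfolding m_def by (rule I_mult[OF G_I[OF g(1)] scCP])
    have mCP: "m \<in> CP S n" unfolding m_def by (rule CP_mult[OF scCP gCP])
    have mkeys: "\<forall>k\<in>Poly_Mapping.keys m. ord k \<delta>"
    proof
      fix k assume "k \<in> Poly_Mapping.keys m"
      then obtain a b where ab: "k = a + b" "a \<in> Poly_Mapping.keys (Poly_Mapping.single \<gamma> c)" "b \<in> Poly_Mapping.keys g"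
        using keys_mult[of "Poly_Mapping.single \<gamma> c" g] unfolding m_def by blast
      have "a = \<gamma>" using ab(2) by (simp split: if_splits)
      have bm: "b \<in> monomials n" using ab(3) g_keys[OF g(1)] by blast
      have "ord (b + \<gamma>) (lead_exp ord g + \<gamma>)"
        using mo_props(5)[OF mo bm g_lead(3)[OF g(1)] gmon g_lead(2)[OF g(1) ab(3)]] .
      then show "ord k \<delta>" using ab(1) \<open>a = \<gamma>\<close> g(2) by (simp add: add.commute)
    qed
    have mlook: "Poly_Mapping.lookup m \<delta> = Poly_Mapping.lookup p \<delta>"
    proof -
      have "Poly_Mapping.lookup m \<delta> = c * Poly_Mapping.lookup g (lead_exp ord g)"
        unfolding m_def g(2) by (simp add: add.commute[of "lead_exp ord g"] lookup_single_mult_add)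
      also have "\<dots> = Poly_Mapping.lookup p \<delta>"
      proof
        fix x show "(c * Poly_Mapping.lookup g (lead_exp ord g)) x = Poly_Mapping.lookup p \<delta> x"
          using LC_nz[OF g(1), of x] CP_lookupD(2)[OF p(2), of x \<delta>]
          by (auto simp: c_def LC_def)
      qed
      finally show ?thesis .
    qed
    define p' where "p' = p - m"
    have p'CP: "p' \<in> CP S n" unfolding p'_def using CP_diff[OF p(2) mCP] .
    have kp': "\<forall>k\<in>Poly_Mapping.keys p'. ord k \<delta>"
      using keys_diff_sub[of p m] dmax mkeys unfolding p'_def by blast
    have dp': "\<delta> \<notin> Poly_Mapping.keys p'"
      unfolding p'_def by (simp add: in_keys_iff lookup_minus mlook)
    have "good p'" using claim[OF p'CP kp' dp'] .
    then obtain r' where r': "r' \<in> CP S n" "p' - r' \<in> I" "Poly_Mapping.keys r' \<subseteq> B"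
       "\<forall>k\<in>Poly_Mapping.keys r'. \<exists>k'\<in>Poly_Mapping.keys p'. ord k k'" unfolding good_def by blast
    have "p - r' \<in> I" using I_add[OF r'(2) mI] unfolding p'_def by (simp add: algebra_simps)
    moreover have "\<forall>k\<in>Poly_Mapping.keys r'. \<exists>k'\<in>Poly_Mapping.keys p. ord k k'"
    proof
      fix k assume kr: "k \<in> Poly_Mapping.keys r'"
      then obtain k' where k': "k' \<in> Poly_Mapping.keys p'" "ord k k'" using r'(4) by blast
      have "ord k' \<delta>" using kp' k'(1) by blast
      moreover have "k \<in> monomials n" using kr CP_lookupD(3)[OF r'(1)] by blast
      moreover have "k' \<in> monomials n" using k'(1) CP_lookupD(3)[OF p'CP] by blast
      ultimately have "ord k \<delta>" using mo_props(3)[OF mo _ _ dmon] k'(2) by blast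
      then show "\<exists>k'\<in>Poly_Mapping.keys p. ord k k'" using dk by blast
    qed
    ultimately have "good p" using r'(1,3) unfolding good_def by blast
    then show False using p(3) by simp
  qed
qed

definition N :: "(nat \<Rightarrow>\<^sub>0 nat) \<Rightarrow> 'a cpoly" where
  "N \<beta> = (SOME r. r \<in> CP S n \<and> Poly_Mapping.single \<beta> (chi S) - r \<in> I \<and> Poly_Mapping.keys r \<subseteq> B \<and>
      (\<forall>k\<in>Poly_Mapping.keys r. ord k \<beta>))"

lemma N_props: assumes "\<beta> \<in> monomials n"
  shows "N \<beta> \<in> CP S n" "Poly_Mapping.single \<beta> (chi S) - N \<beta> \<in> I" "Poly_Mapping.keys (N \<beta>) \<subseteq> B"
    "\<And>k. k \<in> Poly_Mapping.keys (N \<beta>) \<Longrightarrow> ord k \<beta>"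
proof -
  have ks: "Poly_Mapping.keys (Poly_Mapping.single \<beta> (chi S)) \<subseteq> {\<beta>}" by simp
  obtain r where r: "r \<in> CP S n" "Poly_Mapping.single \<beta> (chi S) - r \<in> I" "Poly_Mapping.keys r \<subseteq> B"
      "\<forall>k\<in>Poly_Mapping.keys r. \<exists>k'\<in>Poly_Mapping.keys (Poly_Mapping.single \<beta> (chi S)). ord k k'"
    using nf_exists[OF chiS_CP[OF assms]] unfolding good_def by blast
  have "\<exists>r. r \<in> CP S n \<and> Poly_Mapping.single \<beta> (chi S) - r \<in> I \<and> Poly_Mapping.keys r \<subseteq> B \<and>
      (\<forall>k\<in>Poly_Mapping.keys r. ord k \<beta>)"
    using r ks by (intro exI[of _ r]) blast
  from someI_ex[OF this] show "N \<beta> \<in> CP S n" "Poly_Mapping.single \<beta> (chi S) - N \<beta> \<in> I" "Poly_Mapping.keys (N \<beta>) \<subseteq> B"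
    "\<And>k. k \<in> Poly_Mapping.keys (N \<beta>) \<Longrightarrow> ord k \<beta>" unfolding N_def by blast+
qed

lemma N_B: assumes "\<beta> \<in> B" shows "N \<beta> = Poly_Mapping.single \<beta> (chi S)"
proof -
  have bm: "\<beta> \<in> monomials n" using assms unfolding Bset_def by blast
  have "Poly_Mapping.keys (Poly_Mapping.single \<beta> (chi S) - N \<beta>) \<subseteq> B"
    using keys_diff_sub[of "Poly_Mapping.single \<beta> (chi S)" "N \<beta>"] N_props(3)[OF bm] assms by (auto split: if_splits)
  then have "Poly_Mapping.single \<beta> (chi S) - N \<beta> = 0" using uniq N_props(2)[OF bm] by blast
  then show ?thesis by simp
qed

definition NFS :: "'a cpoly \<Rightarrow> 'a cpoly" where
  "NFS f = (\<Sum>\<beta>\<in>Poly_Mapping.keys f. Poly_Mapping.single 0 (Poly_Mapping.lookup f \<beta>) * N \<beta>)"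

lemma NFS_I: assumes "f \<in> I" shows "NFS f = 0"
proof -
  have fCP: "f \<in> CP S n" using assms I_CP by blast
  have fk: "Poly_Mapping.keys f \<subseteq> monomials n" using CP_lookupD(3)[OF fCP] .
  have sb: "Poly_Mapping.single 0 (Poly_Mapping.lookup f \<beta>) * Poly_Mapping.single \<beta> (chi S)
      = Poly_Mapping.single \<beta> (Poly_Mapping.lookup f \<beta>)" for \<beta>
    using chi_mult[of S "Poly_Mapping.lookup f \<beta>"] CP_lookupD(2)[OF fCP]
    by (simp add: mult_single mult.commute)
  have "f - NFS f = (\<Sum>\<beta>\<in>Poly_Mapping.keys f. Poly_Mapping.single 0 (Poly_Mapping.lookup f \<beta>) *
       (Poly_Mapping.single \<beta> (chi S) - N \<beta>))"
    unfolding NFS_def right_diff_distrib sum_subtractf sb using pm_expand[of f] by simp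
  also have "\<dots> \<in> I"
  proof (rule I_sum)
    fix \<beta> assume b: "\<beta> \<in> Poly_Mapping.keys f"
    have "Poly_Mapping.single 0 (Poly_Mapping.lookup f \<beta>) \<in> CP S n"
      using CP_single[OF monomials_zero CP_lookupD(1)[OF fCP] CP_lookupD(2)[OF fCP]] .
    then show "Poly_Mapping.single 0 (Poly_Mapping.lookup f \<beta>) * (Poly_Mapping.single \<beta> (chi S) - N \<beta>) \<in> I"
      using I_mult N_props(2) b fk by blast
  qed
  finally have "f - (f - NFS f) \<in> I" using I_diff[OF assms] by blast
  then have "NFS f \<in> I" by simp
  moreover have "Poly_Mapping.keys (NFS f) \<subseteq> B"
  proof -
    have "Poly_Mapping.keys (NFS f) \<subseteq> (\<Union>\<beta>\<in>Poly_Mapping.keys f. Poly_Mapping.keys (Poly_Mapping.single 0 (Poly_Mapping.lookup f \<beta>) * N \<beta>))"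
      unfolding NFS_def by (rule keys_sum)
    also have "\<dots> \<subseteq> B" using keys_smult0 N_props(3) fk by blast
    finally show ?thesis .
  qed
  ultimately show ?thesis by (rule uniq)
qed

definition NFU :: "'a set \<Rightarrow> 'a cpoly \<Rightarrow> 'a cpoly" where
  "NFU U p = (\<Sum>\<beta>\<in>Poly_Mapping.keys p. Poly_Mapping.single 0 (Poly_Mapping.lookup p \<beta>) * restr U (N \<beta>))"

lemma NFU_super: assumes "finite K" "Poly_Mapping.keys p \<subseteq> K"
  shows "NFU U p = (\<Sum>\<beta>\<in>K. Poly_Mapping.single 0 (Poly_Mapping.lookup p \<beta>) * restr U (N \<beta>))"
  unfolding NFU_def by (rule sum.mono_neutral_left[OF assms]) (auto simp: in_keys_iff)

lemma NFU_add: "NFU U (p + q) = NFU U p + NFU U q"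
proof -
  let ?K = "Poly_Mapping.keys p \<union> Poly_Mapping.keys q"
  have "NFU U (p + q) = (\<Sum>\<beta>\<in>?K. Poly_Mapping.single 0 (Poly_Mapping.lookup (p + q) \<beta>) * restr U (N \<beta>))"
    by (rule NFU_super) (simp_all add: keys_add)
  also have "\<dots> = (\<Sum>\<beta>\<in>?K. Poly_Mapping.single 0 (Poly_Mapping.lookup p \<beta>) * restr U (N \<beta>)) +
       (\<Sum>\<beta>\<in>?K. Poly_Mapping.single 0 (Poly_Mapping.lookup q \<beta>) * restr U (N \<beta>))"
    by (simp add: lookup_add single_add distrib_right sum.distrib)
  also have "\<dots> = NFU U p + NFU U q"
    using NFU_super[of ?K p U] NFU_super[of ?K q U] by simp
  finally show ?thesis .
qed

lemma NFU_zero: "NFU U 0 = 0" by (simp add: NFU_def)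

lemma NFU_sum: "NFU U (sum f K) = (\<Sum>k\<in>K. NFU U (f k))"
  by (induction K rule: infinite_finite_induct) (auto simp: NFU_zero NFU_add)

lemma NFU_smult: "NFU U (Poly_Mapping.single 0 c * p) = Poly_Mapping.single 0 c * NFU U p"
proof -
  have "NFU U (Poly_Mapping.single 0 c * p) =
     (\<Sum>\<beta>\<in>Poly_Mapping.keys p. Poly_Mapping.single 0 (Poly_Mapping.lookup (Poly_Mapping.single 0 c * p) \<beta>) * restr U (N \<beta>))"
    by (rule NFU_super) (auto simp: keys_smult0[THEN subsetD])
  also have "\<dots> = Poly_Mapping.single 0 c * NFU U p"
    unfolding NFU_def sum_distrib_left lookup_smult0
    by (rule sum.cong[OF refl]) (subst mult.assoc[symmetric], subst mult_single, simp)
  finally show ?thesis .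
qed

lemma NFU_restr: assumes "f \<in> CP S n" shows "NFU U (restr U f) = restr U (NFS f)"
proof -
  have "NFU U (restr U f) = (\<Sum>\<beta>\<in>Poly_Mapping.keys f. Poly_Mapping.single 0 (Poly_Mapping.lookup (restr U f) \<beta>) * restr U (N \<beta>))"
    by (rule NFU_super) (auto simp: restr_keys[THEN subsetD])
  also have "\<dots> = restr U (NFS f)"
    unfolding NFS_def restr_sum
  proof (rule sum.cong[OF refl])
    fix \<beta>
    show "Poly_Mapping.single 0 (Poly_Mapping.lookup (restr U f) \<beta>) * restr U (N \<beta>) =
      restr U (Poly_Mapping.single 0 (Poly_Mapping.lookup f \<beta>) * N \<beta>)"
      by (rule poly_mapping_eqI)
        (simp add: lookup_restr lookup_smult0 chi_def fun_eq_iff)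
  qed
  finally show ?thesis .
qed

lemma chiUS: "U \<subseteq> S \<Longrightarrow> chi U * chi S = chi U"
  by (auto simp: chi_def fun_eq_iff)

lemma NFU_kill1: assumes "U \<subseteq> S" "f \<in> I" "q \<in> CP U n" shows "NFU U (q * restr U f) = 0"
proof -
  have qk: "Poly_Mapping.keys q \<subseteq> monomials n" using CP_lookupD(3)[OF assms(3)] .
  have e1: "Poly_Mapping.lookup q \<gamma> * chi U = Poly_Mapping.lookup q \<gamma>" for \<gamma>
    using chi_mult[of U "Poly_Mapping.lookup q \<gamma>"] CP_lookupD(2)[OF assms(3)] by (simp add: mult.commute)
  have e2: "chi U * chi S = chi U" using chiUS[OF assms(1)] .
  have e3: "Poly_Mapping.lookup q \<gamma> * chi S = Poly_Mapping.lookup q \<gamma>" for \<gamma>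
    using chi_mult[of S "Poly_Mapping.lookup q \<gamma>"] CP_lookupD(2)[OF assms(3)] assms(1)
    by (auto simp: mult.commute)
  have trm: "Poly_Mapping.single \<gamma> (Poly_Mapping.lookup q \<gamma>) * restr U f =
     Poly_Mapping.single 0 (Poly_Mapping.lookup q \<gamma>) * restr U (Poly_Mapping.single \<gamma> (chi S) * f)" for \<gamma>
  proof -
    have "Poly_Mapping.single \<gamma> (Poly_Mapping.lookup q \<gamma>) * restr U f = Poly_Mapping.single \<gamma> (Poly_Mapping.lookup q \<gamma>) * f"
      unfolding restr_eq by (simp only: mult.assoc[symmetric] mult_single) (simp add: e1)
    moreover have "Poly_Mapping.single 0 (Poly_Mapping.lookup q \<gamma>) * restr U (Poly_Mapping.single \<gamma> (chi S) * f)
       = Poly_Mapping.single \<gamma> (Poly_Mapping.lookup q \<gamma>) * f"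
      unfolding restr_eq by (simp only: mult.assoc[symmetric] mult_single) (simp add: e1 e2 e3 mult.assoc)
    ultimately show ?thesis by simp
  qed
  have eqq: "q * restr U f = (\<Sum>\<gamma>\<in>Poly_Mapping.keys q. Poly_Mapping.single 0 (Poly_Mapping.lookup q \<gamma>) *
      restr U (Poly_Mapping.single \<gamma> (chi S) * f))"
    by (subst pm_expand[of q]) (simp add: sum_distrib_right trm)
  have "NFU U (q * restr U f) = (\<Sum>\<gamma>\<in>Poly_Mapping.keys q. Poly_Mapping.single 0 (Poly_Mapping.lookup q \<gamma>) *
      restr U (NFS (Poly_Mapping.single \<gamma> (chi S) * f)))"
  proof -
    have "\<And>\<gamma>. \<gamma> \<in> Poly_Mapping.keys q \<Longrightarrow> NFU U (restr U (Poly_Mapping.single \<gamma> (chi S) * f)) =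
        restr U (NFS (Poly_Mapping.single \<gamma> (chi S) * f))"
      using I_CP I_mult[OF assms(2) chiS_CP] qk by (intro NFU_restr) blast
    then show ?thesis unfolding eqq by (simp add: NFU_sum NFU_smult)
  qed
  also have "\<dots> = 0"
    using NFS_I I_mult[OF assms(2) chiS_CP] qk by (auto intro!: sum.neutral simp: restr_eq)
  finally show ?thesis .
qed

lemma NFU_kill: assumes "U \<subseteq> S" "h \<in> ideal_restr U n I" shows "NFU U h = 0"
proof -
  obtain G1 q where 1: "finite G1" "G1 \<subseteq> restr U ` I" "\<forall>t\<in>G1. q t \<in> CP U n" "h = (\<Sum>t\<in>G1. q t * t)"
    using assms(2) unfolding ideal_restr_def ideal_gen_def by blast
  have "\<forall>t\<in>G1. NFU U (q t * t) = 0"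
  proof
    fix t assume "t \<in> G1"
    then obtain f where "f \<in> I" "t = restr U f" using 1 by blast
    then show "NFU U (q t * t) = 0" using NFU_kill1[OF assms(1)] 1(3) \<open>t \<in> G1\<close> by blast
  qed
  then show ?thesis unfolding 1(4) NFU_sum by simp
qed

lemma main_lead: assumes "U \<subseteq> S" "h \<in> ideal_restr U n I" "h \<in> CP U n" "h \<noteq> 0"
  shows "lead_exp ord h \<notin> B"
proof
  assume dB: "lead_exp ord h \<in> B"
  define \<delta> where "\<delta> = lead_exp ord h"
  have hk: "Poly_Mapping.keys h \<subseteq> monomials n" using CP_lookupD(3)[OF assms(3)] .
  have dk: "\<delta> \<in> Poly_Mapping.keys h" and dmax: "\<And>b. b \<in> Poly_Mapping.keys h \<Longrightarrow> ord b \<delta>"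
    using lead_props[OF mo hk assms(4)] \<delta>_def by auto
  have dm: "\<delta> \<in> monomials n" using dk hk by blast
  have other: "Poly_Mapping.lookup h \<beta> * (chi U * Poly_Mapping.lookup (N \<beta>) \<delta>) = 0"
    if b: "\<beta> \<in> Poly_Mapping.keys h - {\<delta>}" for \<beta>
  proof -
    have bm: "\<beta> \<in> monomials n" using b hk by blast
    have "Poly_Mapping.lookup (N \<beta>) \<delta> = 0"
    proof (rule ccontr)
      assume "Poly_Mapping.lookup (N \<beta>) \<delta> \<noteq> 0"
      then have "ord \<delta> \<beta>" using N_props(4)[OF bm] by (simp add: in_keys_iff)
      moreover have "ord \<beta> \<delta>" using dmax b by blast
      ultimately have "\<beta> = \<delta>" using mo_props(2)[OF mo bm dm] by blast
      then show False using b by blast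
    qed
    then show ?thesis by simp
  qed
  have "0 = Poly_Mapping.lookup (NFU U h) \<delta>" using NFU_kill[OF assms(1,2)] by simp
  also have "\<dots> = (\<Sum>\<beta>\<in>Poly_Mapping.keys h. Poly_Mapping.lookup h \<beta> * (chi U * Poly_Mapping.lookup (N \<beta>) \<delta>))"
    unfolding NFU_def lookup_sum lookup_smult0 lookup_restr ..
  also have "\<dots> = Poly_Mapping.lookup h \<delta> * (chi U * Poly_Mapping.lookup (N \<delta>) \<delta>)"
    unfolding sum.remove[OF finite_keys dk] using other by (simp add: sum.neutral)
  also have "\<dots> = Poly_Mapping.lookup h \<delta>"
    using N_B[OF dB[folded \<delta>_def]] chiUS[OF assms(1)] chi_mult[of U "Poly_Mapping.lookup h \<delta>"]
      CP_lookupD(2)[OF assms(3)] by (simp add: mult.commute)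
  finally show False using dk by (simp add: in_keys_iff)
qed

lemma lead_restr: assumes "g \<in> set G" "U \<subseteq> S" "U \<noteq> {}"
  shows "lead_exp ord (restr U g) = lead_exp ord g"
    "\<And>x. x \<in> U \<Longrightarrow> LC ord (restr U g) x = LC ord g x"
    "restr U g \<noteq> 0"
proof -
  obtain x0 where x0: "x0 \<in> U" using assms(3) by blast
  have lk: "Poly_Mapping.lookup (restr U g) (lead_exp ord g) = chi U * LC ord g"
    by (simp add: lookup_restr LC_def)
  have "Poly_Mapping.lookup (restr U g) (lead_exp ord g) x0 \<noteq> 0"
    unfolding lk using LC_nz[OF assms(1)] x0 assms(2) by (auto simp: chi_def)
  then have lin: "lead_exp ord g \<in> Poly_Mapping.keys (restr U g)" by (auto simp: in_keys_iff)
  have ks: "Poly_Mapping.keys (restr U g) \<subseteq> monomials n" using restr_keys g_keys[OF assms(1)] by blast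
  show le: "lead_exp ord (restr U g) = lead_exp ord g"
    by (rule lead_unique[OF mo ks lin]) (use restr_keys g_lead(2)[OF assms(1)] in blast)
  show "\<And>x. x \<in> U \<Longrightarrow> LC ord (restr U g) x = LC ord g x"
    unfolding LC_def le using lk by (simp add: LC_def chi_def)
  show "restr U g \<noteq> 0" using lin by auto
qed

lemma restr_I_in: assumes "f \<in> I" "U \<subseteq> S" shows "restr U f \<in> ideal_gen U n (restr U ` set G)"
proof -
  obtain G1 q where 1: "finite G1" "G1 \<subseteq> set G" "\<forall>g\<in>G1. q g \<in> CP S n" "f = (\<Sum>g\<in>G1. q g * g)"
    using assms(1) I_eq unfolding ideal_gen_def by blast
  have "restr U f = (\<Sum>g\<in>G1. restr U (q g) * restr U g)" unfolding 1(4) restr_sum restr_mult ..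
  also have "\<dots> \<in> ideal_gen U n (restr U ` set G)"
  proof (rule ig_sum)
    fix g assume g: "g \<in> G1"
    have "restr U g \<in> ideal_gen U n (restr U ` set G)"
      using 1(2) g by (intro ig_base) (auto simp: restr_vanish)
    then show "restr U (q g) * restr U g \<in> ideal_gen U n (restr U ` set G)"
      using ig_mult restr_CP[OF _ assms(2)] 1(3) g by blast
  qed
  finally show ?thesis .
qed

lemma J_CP: assumes "U \<subseteq> S" shows "ideal_restr U n I \<subseteq> CP U n"
  unfolding ideal_restr_def using I_CP restr_CP[OF _ assms] by (intro ig_CP) blast

lemma final: assumes U: "U \<subseteq> S" "U \<noteq> {}"
  shows "groebner_basis U n ord (map (restr U) G) (ideal_restr U n I)"
  unfolding groebner_basis_def set_map
proof (intro conjI)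
  show "restr U ` set G \<subseteq> CP U n" using G_CP restr_CP[OF _ U(1)] by blast
  show eqJ: "ideal_gen U n (restr U ` set G) = ideal_restr U n I"
  proof
    show "ideal_gen U n (restr U ` set G) \<subseteq> ideal_restr U n I"
      unfolding ideal_restr_def using G_I by (intro ig_mono image_mono) blast
    show "ideal_restr U n I \<subseteq> ideal_gen U n (restr U ` set G)"
      unfolding ideal_restr_def using restr_I_in[OF _ U(1)] by (intro ig_trans image_subsetI)
  qed
  let ?J = "ideal_restr U n I"
  show "ideal_gen U n (LT ord ` restr U ` set G) = ideal_gen U n {LT ord h |h. h \<in> ?J \<and> h \<noteq> 0}"
  proof
    show "ideal_gen U n (LT ord ` restr U ` set G) \<subseteq> ideal_gen U n {LT ord h |h. h \<in> ?J \<and> h \<noteq> 0}"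
    proof (rule ig_mono, rule subsetI)
      fix t assume "t \<in> LT ord ` restr U ` set G"
      then obtain g where g: "g \<in> set G" "t = LT ord (restr U g)" by blast
      have "restr U g \<in> ?J" unfolding ideal_restr_def using G_I[OF g(1)]
        by (intro ig_base) (auto simp: restr_vanish)
      then show "t \<in> {LT ord h |h. h \<in> ?J \<and> h \<noteq> 0}" using g lead_restr(3)[OF g(1) U] by blast
    qed
    show "ideal_gen U n {LT ord h |h. h \<in> ?J \<and> h \<noteq> 0} \<subseteq> ideal_gen U n (LT ord ` restr U ` set G)"
    proof (rule ig_trans, rule subsetI)
      fix t assume "t \<in> {LT ord h |h. h \<in> ?J \<and> h \<noteq> 0}"
      then obtain h where h: "t = LT ord h" "h \<in> ?J" "h \<noteq> 0" by blast
      have hCP: "h \<in> CP U n" using J_CP[OF U(1)] h(2) by blast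
      define \<delta> where "\<delta> = lead_exp ord h"
      have dnB: "\<delta> \<notin> B" using main_lead[OF U(1) h(2) hCP h(3)] \<delta>_def by simp
      have dm: "\<delta> \<in> monomials n" using lead_props(1)[OF mo CP_lookupD(3)[OF hCP] h(3)] CP_lookupD(3)[OF hCP] \<delta>_def by blast
      then obtain g \<gamma> where g: "g \<in> set G" "\<delta> = lead_exp ord g + \<gamma>"
        using dnB unfolding Bset_def by blast
      have gmon: "\<gamma> \<in> monomials n" using monomials_addD[of _ _ n] g(2) dm by metis
      define c where "c = (\<lambda>x. if x \<in> U then Poly_Mapping.lookup h \<delta> x / LC ord g x else 0)"
      have ccont: "continuous_on U c"
      proof -
        have "continuous_on U (LC ord g)" unfolding LC_def
          using continuous_on_subset[OF CP_lookupD(1)[of g S n] U(1)] G_CP g(1) by blast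
        then have "continuous_on U (\<lambda>x. Poly_Mapping.lookup h \<delta> x / LC ord g x)"
          using CP_lookupD(1)[OF hCP] LC_nz[OF g(1)] U(1)
          by (intro continuous_on_divide) auto
        then show ?thesis by (rule continuous_on_eq) (simp add: c_def)
      qed
      have scCP: "Poly_Mapping.single \<gamma> c \<in> CP U n"
        by (rule CP_single[OF gmon ccont]) (simp add: c_def)
      have LTg: "LT ord (restr U g) \<in> ideal_gen U n (LT ord ` restr U ` set G)"
        using g(1) by (intro ig_base) (auto simp: LT_def LC_def lookup_single when_def restr_vanish)
      have "c * LC ord (restr U g) = Poly_Mapping.lookup h \<delta>"
      proof
        fix x show "(c * LC ord (restr U g)) x = Poly_Mapping.lookup h \<delta> x"
          using lead_restr(2)[OF g(1) U, of x] LC_nz[OF g(1), of x] U(1) CP_lookupD(2)[OF hCP, of x \<delta>]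
          by (auto simp: c_def LC_def restr_vanish)
      qed
      then have "t = Poly_Mapping.single \<gamma> c * LT ord (restr U g)"
        unfolding h(1) LT_def lead_restr(1)[OF g(1) U] mult_single
        by (simp add: LC_def \<delta>_def[symmetric] g(2) add.commute)
      then show "t \<in> ideal_gen U n (LT ord ` restr U ` set G)"
        using ig_mult[OF LTg scCP] by simp
    qed
  qed
  show "\<forall>g\<in>restr U ` set G. \<forall>x\<in>U. LC ord g x \<noteq> 0"
  proof (intro ballI)
    fix g' x assume "g' \<in> restr U ` set G" "x \<in> U"
    then obtain g where g: "g \<in> set G" "g' = restr U g" by blast
    show "LC ord g' x \<noteq> 0" unfolding g(2) lead_restr(2)[OF g(1) U \<open>x \<in> U\<close>]
      using LC_nz[OF g(1)] U(1) \<open>x \<in> U\<close> by blast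
  qed
qed
end

theorem mainTheorem6:
  fixes S A :: "(real^'m::finite) set"
    and n :: nat
    and ord :: "(nat \<Rightarrow>\<^sub>0 nat) \<Rightarrow> (nat \<Rightarrow>\<^sub>0 nat) \<Rightarrow> bool"
    and I :: "(real^'m) cpoly set"
    and G :: "(real^'m) cpoly list"
  assumes "condensed S"
    and "monomial_order n ord"
    and "groebner_basis S n ord G I"
    and "measure_zero_in S A"
  shows "groebner_basis (S - A) n ord (map (restr (S - A)) G) (ideal_restr (S - A) n I)"
proof -
  have A: "A \<subseteq> S" "A \<noteq> S" using assms(4) unfolding measure_zero_in_def by simp_all
  then have ne: "S - A \<noteq> {}" "S \<noteq> {}" by auto
  interpret gbs S n ord G I using assms(2,3) ne(2) by unfold_locales
  show ?thesis using final[of "S - A"] ne(1) by simp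
qed

end
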